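(* Let $\mathbf{A}\in\mathcal{PCM}_n$ be a double perturbed pairwise comparison matrix. Then its principal right eigenvector $\mathbf{w}^{EM}$ is efficient.
   Context: A pairwise comparison matrix (PCM) of size $n\times n$ is a matrix $\mathbf{A}=[a_{ij}]$ with $a_{ij}>0$ and $a_{ij}=1/a_{ji}$ for all $i,j$; the set of these is $\mathcal{PCM}_n$. A PCM is consistent if $a_{ik}a_{kj}=a_{ij}$ for all $i,j,k$. A PCM is double perturbed if it differs from a consistent PCM in two elements and their reciprocals, i.e. it can be made consistent by altering two entries (and their reciprocal entries). The principal right eigenvector $\mathbf{w}^{EM}$ is the positive (Perron) eigenvector: $\mathbf{A}\mathbf{w}^{EM}=\lambda_{\max}\mathbf{w}^{EM}$, $\lambda_{\max}$ the Perron eigenvalue. A positive weight vector $\mathbf{w}=(w_1,\dots,w_n)^T$ is efficient if there is no other positive vector $\mathbf{w}'$ with $|a_{ij}-w'_i/w'_j|\le |a_{ij}-w_i/w_j|$ for all $i,j$ and $|a_{k\ell}-w'_k/w'_\ell|< |a_{k\ell}-w_k/w_\ell|$ for some $k,\ell$. *)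

theory Defs
  imports "HOL-Analysis.Analysis"
begin

definition is_PCM :: "real^'n^'n \<Rightarrow> bool" where
  "is_PCM A \<longleftrightarrow> (\<forall>i j. A$i$j > 0 \<and> A$i$j = 1 / A$j$i)"

definition consistent_PCM :: "real^'n^'n \<Rightarrow> bool" where
  "consistent_PCM A \<longleftrightarrow> is_PCM A \<and> (\<forall>i j k. A$i$k * A$k$j = A$i$j)"

definition double_perturbed :: "real^'n^'n \<Rightarrow> bool" where
  "double_perturbed A \<longleftrightarrow> is_PCM A \<and>
     (\<exists>B i j k l. consistent_PCM B \<and> i \<noteq> j \<and> k \<noteq> l \<and> {i, j} \<noteq> {k, l} \<and>
        (\<forall>p q. (p, q) \<notin> {(i, j), (j, i), (k, l), (l, k)} \<longrightarrow> A$p$q = B$p$q))"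

definition cmat :: "real^'n^'n \<Rightarrow> complex^'n^'n" where
  "cmat A = (\<chi> i j. complex_of_real (A$i$j))"

definition perron_eigenvalue :: "real^'n^'n \<Rightarrow> real \<Rightarrow> bool" where
  "perron_eigenvalue A lam \<longleftrightarrow>
     (\<exists>v::complex^'n. v \<noteq> 0 \<and> cmat A *v v = complex_of_real lam *s v) \<and>
     (\<forall>\<mu> (v::complex^'n). v \<noteq> 0 \<and> cmat A *v v = \<mu> *s v \<longrightarrow> cmod \<mu> \<le> lam)"

definition principal_right_eigenvector :: "real^'n^'n \<Rightarrow> real^'n \<Rightarrow> bool" where
  "principal_right_eigenvector A w \<longleftrightarrow>
     (\<forall>i. w$i > 0) \<and> (\<exists>lam. perron_eigenvalue A lam \<and> A *v w = lam *s w)"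

definition efficient :: "real^'n^'n \<Rightarrow> real^'n \<Rightarrow> bool" where
  "efficient A w \<longleftrightarrow> (\<forall>i. w$i > 0) \<and>
     \<not> (\<exists>w'::real^'n. (\<forall>i. w'$i > 0) \<and>
          (\<forall>i j. \<bar>A$i$j - w'$i / w'$j\<bar> \<le> \<bar>A$i$j - w$i / w$j\<bar>) \<and>
          (\<exists>k l. \<bar>A$k$l - w'$k / w'$l\<bar> < \<bar>A$k$l - w$k / w$l\<bar>))"

end

theory Submission
  imports Defs
begin


lemma sum3_le:
  fixes f :: "'n::finite \<Rightarrow> real"
  assumes "\<And>p. f p \<ge> 0" "p\<noteq>q" "p\<noteq>s" "q\<noteq>s"
  shows "f p + f q + f s \<le> sum f UNIV"
proof -
  have "sum f {p,q,s} \<le> sum f UNIV" by (rule sum_mono2) (auto simp: assms)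
  thus ?thesis using assms by simp
qed

lemma sum2_le:
  fixes f :: "'n::finite \<Rightarrow> real"
  assumes "\<And>p. f p \<ge> 0" "p\<noteq>q"
  shows "f p + f q \<le> sum f UNIV"
proof -
  have "sum f {p,q} \<le> sum f UNIV" by (rule sum_mono2) (auto simp: assms)
  thus ?thesis using assms by simp
qed

lemma sum3_eq:
  fixes f :: "'n::finite \<Rightarrow> real"
  assumes "UNIV = {p,q,s}" "p\<noteq>q" "p\<noteq>s" "q\<noteq>s"
  shows "sum f UNIV = f p + f q + f s"
proof -
  have "sum f UNIV = sum f {p,q,s}" by (simp only: assms(1))
  thus ?thesis using assms(2-4) by simp
qed

lemma pwl:
  fixes C :: "'n \<Rightarrow> 'n \<Rightarrow> real"
  assumes ab: "a \<noteq> b" and cd: "c \<noteq> d" and d1: "\<not>(a=c \<and> b=d)" "\<not>(a=d \<and> b=c)"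
  and one: "(p,q) \<notin> {(a,b),(b,a),(c,d),(d,c)} \<Longrightarrow> C p q = 1"
  and Cba: "C b a = 1 / C a b" and Cdc: "C d c = 1/ C c d"
  shows "(C p q - 1) * u q = (if p=a \<and> q = b then (C a b-1)*u b else 0) + (if p=b \<and> q = a then (1/C a b-1)*u a else 0)
     + (if p=c \<and> q = d then (C c d-1)*u d else 0) + (if p=d \<and> q = c then (1/C c d-1)*u c else 0)"
proof (cases "(p,q) \<in> {(a,b),(b,a),(c,d),(d,c)}")
  case False
  have n: "(p=a \<and> q=b) = False" "(p=b \<and> q=a) = False" "(p=c \<and> q=d) = False" "(p=d \<and> q=c) = False"
    using False by auto
  show ?thesis by (simp only: one[OF False] n if_False) simp
next
  case True
  then consider "p=a" "q=b" | "p=b" "q=a" | "p=c" "q=d" | "p=d" "q=c" by auto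
  then show ?thesis
  proof cases
    case 1
    have f: "(a=c \<and> b=d) = False" "(a=d\<and>b=c)=False" "(a=b\<and>b=a) = False" using ab d1 by auto
    show ?thesis by (simp add: 1 f)
  next
    case 2
    have f: "(b=c \<and> a=d) = False" "(b=d\<and>a=c)=False" "(b=a\<and>a=b) = False" using ab d1 by auto
    show ?thesis by (simp add: 2 f Cba)
  next
    case 3
    have f: "(c=a \<and> d=b) = False" "(c=b\<and>d=a)=False" "(c=d\<and>d=c) = False" using cd d1 by auto
    show ?thesis by (simp add: 3 f)
  next
    case 4
    have f: "(d=a \<and> c=b) = False" "(d=b\<and>c=a)=False" "(d=c\<and>c=d) = False" using cd d1 by auto
    show ?thesis by (simp add: 4 f Cdc)
  qed
qed
lemma sum_if_delta:
  "(\<Sum>q\<in>(UNIV::'n::finite set). if P \<and> q = b then (K::real) else 0) = (if P then K else 0)"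
  by (cases P) auto

lemma divle:
  fixes x U P Q :: real
  assumes "x > 0" "U + P \<le> x * (U + Q)"
  shows "(1/x) * (U + P) \<le> U + Q"
  using assms by (simp add: divide_simps mult.commute)

lemma sgn_le:
  fixes s t v w :: real
  assumes "s \<le> 0" "0 \<le> t" "0 \<le> v" "0 \<le> w"
  shows "s * v \<le> t * w"
  by (meson assms mult_nonneg_nonneg mult_nonpos_nonneg order_trans)

lemma core:
  fixes C :: "'n::finite \<Rightarrow> 'n \<Rightarrow> real" and u r :: "'n \<Rightarrow> real"
  assumes ab: "a \<noteq> b" and cd: "c \<noteq> d" and abcd: "{a,b} \<noteq> {c,d}"
  and pos: "\<And>p q. C p q > 0"
  and recip: "\<And>p q. C q p = 1 / C p q"
  and one: "\<And>p q. (p,q) \<notin> {(a,b),(b,a),(c,d),(d,c)} \<Longrightarrow> C p q = 1"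
  and y1: "1 \<le> C c d" and xy: "C c d \<le> C a b"
  and upos: "\<And>p. u p > 0"
  and eig: "\<And>p. (\<Sum>q\<in>UNIV. C p q * u q) = lam * u p"
  and mono: "\<And>p q. C p q * u q \<le> u p \<Longrightarrow> r p \<le> r q"
  shows "r p = r a"
proof -
  define x where "x = C a b"
  define y where "y = C c d"
  define U where "U = sum u UNIV"
  have x1: "1 \<le> x" and y1': "1 \<le> y" and xy': "y \<le> x" using y1 xy by (auto simp: x_def y_def)
  have Cba: "C b a = 1/x" using recip[of a b] by (simp add: x_def)
  have Cdc: "C d c = 1/y" using recip[of c d] by (simp add: y_def)
  have unn: "\<And>p. u p \<ge> 0" using upos less_imp_le by blast
  have lam: "lam > 0"
  proof -
    have "C a a * u a \<le> (\<Sum>q\<in>UNIV. C a q * u q)"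
      by (rule member_le_sum) (auto intro: mult_nonneg_nonneg less_imp_le pos upos)
    moreover have "C a a * u a > 0" using pos upos by simp
    ultimately have "lam * u a > 0" using eig[of a] by simp
    thus ?thesis using upos[of a] by (simp add: zero_less_mult_iff)
  qed
  define D where "D p = (if p=a then (x-1)*u b else 0) + (if p=b then (1/x-1)*u a else 0)
     + (if p=c then (y-1)*u d else 0) + (if p=d then (1/y-1)*u c else 0)" for p
  have d1: "\<not>(a=c \<and> b=d)" "\<not>(a=d \<and> b=c)" using abcd by auto
  have pw: "(C p q - 1) * u q = (if p=a \<and> q = b then (x-1)*u b else 0) + (if p=b \<and> q = a then (1/x-1)*u a else 0)
     + (if p=c \<and> q = d then (y-1)*u d else 0) + (if p=d \<and> q = c then (1/y-1)*u c else 0)" for p q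
    unfolding x_def y_def by (rule pwl[OF ab cd d1 one]) (simp_all add: recip[of a b] recip[of c d])
  have eqD: "lam * u p = U + D p" for p
  proof -
    have "lam * u p = (\<Sum>q\<in>UNIV. u q + (C p q - 1) * u q)"
      by (simp add: eig[symmetric] algebra_simps)
    also have "\<dots> = U + (\<Sum>q\<in>UNIV. (C p q - 1) * u q)" by (simp add: sum.distrib U_def)
    also have "(\<Sum>q\<in>UNIV. (C p q - 1) * u q) = D p"
      unfolding pw D_def by (simp only: sum.distrib sum_if_delta)
    finally show ?thesis .
  qed
  have xpos: "x > 0" and ypos: "y > 0" using x1 y1' by auto
  have ix: "1/x \<le> 1" "1/y \<le> 1" "1/x \<le> 1/y" using x1 y1' xy' by (auto simp: divide_simps)
  have edge: "r p \<le> r q" if h: "C p q * (U + D q) \<le> U + D p" for p q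
  proof -
    have "lam * (C p q * u q) = C p q * (lam * u q)" by (simp add: algebra_simps)
    also have "\<dots> = C p q * (U + D q)" using eqD[of q] by simp
    also note h
    also have "U + D p = lam * u p" using eqD[of p] by simp
    finally have "lam * (C p q * u q) \<le> lam * u p" .
    hence "C p q * u q \<le> u p" using lam by (simp add: mult_le_cancel_left_pos)
    thus ?thesis by (rule mono)
  qed
  have edge1: "r p \<le> r q" if h1: "(p,q) \<notin> {(a,b),(b,a),(c,d),(d,c)}" and h2: "D q \<le> D p" for p q
    using edge[of p q] one[OF h1] h2 by simp
  have Dfree: "D p = 0" if "p \<noteq> a" "p \<noteq> b" "p \<noteq> c" "p \<noteq> d" for p
    using that by (simp add: D_def)
  have Ux: "(x-1)*(U - u a - u b) \<ge> 0" if "U \<ge> u a + u b" using that x1 by simp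
  consider (dis) "a\<noteq>c" "a\<noteq>d" "b\<noteq>c" "b\<noteq>d" | (ac) "a=c" | (ad) "a=d" | (bc) "b=c" | (bd) "b=d" by blast
  hence all: "\<forall>q. r q = r a"
  proof cases
    case dis
    have Da: "D a = (x-1)*u b" and Db: "D b = (1/x-1)*u a" and Dc: "D c = (y-1)*u d" and Dd: "D d = (1/y-1)*u c"
      using ab cd dis by (auto simp: D_def)
    have U3: "u a + u b + u c \<le> U" unfolding U_def by (rule sum3_le) (use unn ab dis in auto)
    have U3': "u c + u d + u a \<le> U" unfolding U_def by (rule sum3_le) (use unn cd dis in auto)
    have e1: "r b \<le> r a"
    proof (rule edge)
      have "x * (U + (1/x-1)*u a) - (U + (x-1)*u b) = (x-1)*(U - u a - u b)"
        using xpos by (simp add: algebra_simps)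
      moreover have "(x-1)*(U - u a - u b) \<ge> 0" using U3 unn[of c] x1 by simp
      ultimately show "C b a * (U + D a) \<le> U + D b" unfolding Cba Da Db
        by (intro divle xpos) linarith
    qed
    have e2: "r d \<le> r c"
    proof (rule edge)
      have "y * (U + (1/y-1)*u c) - (U + (y-1)*u d) = (y-1)*(U - u c - u d)"
        using ypos by (simp add: algebra_simps)
      moreover have "(y-1)*(U - u c - u d) \<ge> 0" using U3' unn[of a] y1' by simp
      ultimately show "C d c * (U + D c) \<le> U + D d" unfolding Cdc Dc Dd
        by (intro divle ypos) linarith
    qed
    have e3: "r a \<le> r d"
    proof (rule edge1)
      show "(a,d) \<notin> {(a,b),(b,a),(c,d),(d,c)}" using ab cd dis by auto
      show "D d \<le> D a" unfolding Da Dd by (rule sgn_le) (use ix x1 y1' unn in auto)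
    qed
    have e4: "r c \<le> r b"
    proof (rule edge1)
      show "(c,b) \<notin> {(a,b),(b,a),(c,d),(d,c)}" using ab cd dis by auto
      show "D b \<le> D c" unfolding Db Dc by (rule sgn_le) (use ix x1 y1' unn in auto)
    qed
    show ?thesis
    proof
      fix q
      show "r q = r a"
      proof (cases "q \<in> {a,b,c,d}")
        case True thus ?thesis using e1 e2 e3 e4 by auto
      next
        case False
        have Dq: "D q = 0" using False by (intro Dfree) auto
        have "r a \<le> r q"
        proof (rule edge1)
          show "(a,q) \<notin> {(a,b),(b,a),(c,d),(d,c)}" using False by auto
          show "D q \<le> D a" unfolding Dq Da using sgn_le[of 0 "x-1" 0 "u b"] x1 unn by simp
        qed
        moreover have "r q \<le> r b"
        proof (rule edge1)
          show "(q,b) \<notin> {(a,b),(b,a),(c,d),(d,c)}" using False by auto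
          show "D b \<le> D q" unfolding Dq Db using sgn_le[of "1/x-1" 0 "u a" 0] ix unn by simp
        qed
        ultimately show ?thesis using e1 e2 e3 e4 by auto
      qed
    qed
  next
    case ac
    have bd: "b \<noteq> d" using d1 ac by auto
    have ad: "a \<noteq> d" using cd ac by auto
    have Cad: "C a d = y" using ac by (simp add: y_def)
    have Cda: "C d a = 1/y" using ac Cdc by simp
    have Da: "D a = (x-1)*u b + (y-1)*u d" and Db: "D b = (1/x-1)*u a" and Dd: "D d = (1/y-1)*u a"
      using ab bd ad ac by (auto simp: D_def)
    have U3: "u a + u b + u d \<le> U" unfolding U_def by (rule sum3_le) (use unn ab ad bd in auto)
    have e1: "r b \<le> r a"
    proof (rule edge)
      have "x * (U + (1/x-1)*u a) - (U + ((x-1)*u b + (y-1)*u d)) = (x-1)*(U - u a - u b) - (y-1)*u d"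
        using xpos by (simp add: algebra_simps)
      moreover have "(x-1)*(U - u a - u b) \<ge> (x-1)*u d" using U3 x1 by (intro mult_left_mono) auto
      moreover have "(x-1)*u d \<ge> (y-1)*u d" using xy' unn by (intro mult_right_mono) auto
      ultimately show "C b a * (U + D a) \<le> U + D b" unfolding Cba Da Db
        by (intro divle xpos) linarith
    qed
    have e2: "r d \<le> r b"
    proof (rule edge1)
      show "(d,b) \<notin> {(a,b),(b,a),(c,d),(d,c)}" using ab bd ad ac by auto
      show "D b \<le> D d" unfolding Db Dd using ix unn by (intro mult_right_mono) auto
    qed
    have e3: "r a \<le> r d"
    proof (cases "\<exists>p. p \<notin> {a,b,d}")
      case True
      then obtain p where p: "p \<notin> {a,b,d}" by blast
      have Dp: "D p = 0" using p ac by (intro Dfree) auto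
      have "r a \<le> r p"
      proof (rule edge1)
        show "(a,p) \<notin> {(a,b),(b,a),(c,d),(d,c)}" using p ac by auto
        show "D p \<le> D a" unfolding Dp Da using x1 y1' unn by (intro add_nonneg_nonneg mult_nonneg_nonneg) auto
      qed
      moreover have "r p \<le> r d"
      proof (rule edge1)
        show "(p,d) \<notin> {(a,b),(b,a),(c,d),(d,c)}" using p ac by auto
        show "D d \<le> D p" unfolding Dp Dd using sgn_le[of "1/y-1" 0 "u a" 0] ix unn x1 y1' by simp
      qed
      ultimately show ?thesis by simp
    next
      case False
      hence "UNIV = {a,b,d}" by auto
      hence Ueq: "U = u a + u b + u d" unfolding U_def by (rule sum3_eq) (use ab ad bd in auto)
      show ?thesis
      proof (rule edge)
        have "(U + ((x-1)*u b + (y-1)*u d)) - y * (U + (1/y-1)*u a) = (x - y) * u b"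
          using ypos Ueq by (simp add: algebra_simps)
        moreover have "(x - y) * u b \<ge> 0" using xy' unn by simp
        ultimately show "C a d * (U + D d) \<le> U + D a" unfolding Cad Da Dd by linarith
      qed
    qed
    show ?thesis
    proof
      fix q
      show "r q = r a"
      proof (cases "q \<in> {a,b,d}")
        case True thus ?thesis using e1 e2 e3 by auto
      next
        case False
        have Dq: "D q = 0" using False ac by (intro Dfree) auto
        have "r a \<le> r q"
        proof (rule edge1)
          show "(a,q) \<notin> {(a,b),(b,a),(c,d),(d,c)}" using False ac by auto
          show "D q \<le> D a" unfolding Dq Da using x1 y1' unn by (intro add_nonneg_nonneg mult_nonneg_nonneg) auto
        qed
        moreover have "r q \<le> r b"
        proof (rule edge1)
          show "(q,b) \<notin> {(a,b),(b,a),(c,d),(d,c)}" using False ac by auto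
          show "D b \<le> D q" unfolding Dq Db using sgn_le[of "1/x-1" 0 "u a" 0] ix x1 y1' unn by simp
        qed
        ultimately show ?thesis using e1 e2 e3 by auto
      qed
    qed
  next
    case ad
    have bc: "b \<noteq> c" using d1 ad by auto
    have ac: "a \<noteq> c" using cd ad by auto
    have Cca: "C c a = y" using ad by (simp add: y_def)
    have Cac: "C a c = 1/y" using ad Cdc by simp
    have Da: "D a = (x-1)*u b + (1/y-1)*u c" and Db: "D b = (1/x-1)*u a" and Dc: "D c = (y-1)*u a"
      using ab bc ac ad by (auto simp: D_def)
    have U3: "u a + u b + u c \<le> U" unfolding U_def by (rule sum3_le) (use unn ab ac bc in auto)
    have e1: "r a \<le> r c"
    proof (rule edge)
      have "y * (U + ((x-1)*u b + (1/y-1)*u c)) - (U + (y-1)*u a) = (y-1)*(U - u a - u c) + y*(x-1)*u b"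
        using ypos by (simp add: algebra_simps)
      moreover have "(y-1)*(U - u a - u c) \<ge> 0" using U3 y1' unn[of b] by simp
      moreover have "y*(x-1)*u b \<ge> 0" using ypos x1 unn by simp
      ultimately show "C a c * (U + D c) \<le> U + D a" unfolding Cac Da Dc
        by (intro divle ypos) linarith
    qed
    have e2: "r b \<le> r a"
    proof (rule edge)
      have "x * (U + (1/x-1)*u a) - (U + ((x-1)*u b + (1/y-1)*u c)) = (x-1)*(U - u a - u b) + (1 - 1/y)*u c"
        using xpos by (simp add: algebra_simps)
      moreover have "(x-1)*(U - u a - u b) \<ge> 0" using U3 x1 unn[of c] by simp
      moreover have "(1 - 1/y)*u c \<ge> 0" using ix unn by simp
      ultimately show "C b a * (U + D a) \<le> U + D b" unfolding Cba Da Db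
        by (intro divle xpos) linarith
    qed
    have e3: "r c \<le> r b"
    proof (rule edge1)
      show "(c,b) \<notin> {(a,b),(b,a),(c,d),(d,c)}" using ab bc ac ad by auto
      show "D b \<le> D c" unfolding Db Dc by (rule sgn_le) (use ix x1 y1' unn in auto)
    qed
    show ?thesis
    proof
      fix q
      show "r q = r a"
      proof (cases "q \<in> {a,b,c}")
        case True thus ?thesis using e1 e2 e3 by auto
      next
        case False
        have Dq: "D q = 0" using False ad by (intro Dfree) auto
        have "r c \<le> r q"
        proof (rule edge1)
          show "(c,q) \<notin> {(a,b),(b,a),(c,d),(d,c)}" using False ad by auto
          show "D q \<le> D c" unfolding Dq Dc using sgn_le[of 0 "y-1" 0 "u a"] y1' unn by simp
        qed
        moreover have "r q \<le> r b"
        proof (rule edge1)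
          show "(q,b) \<notin> {(a,b),(b,a),(c,d),(d,c)}" using False ad by auto
          show "D b \<le> D q" unfolding Dq Db using sgn_le[of "1/x-1" 0 "u a" 0] ix x1 y1' unn by simp
        qed
        ultimately show ?thesis using e1 e2 e3 by auto
      qed
    qed
  next
    case bc
    have ad: "a \<noteq> d" using d1 bc by auto
    have bd: "b \<noteq> d" using cd bc by auto
    have Cbd: "C b d = y" using bc by (simp add: y_def)
    have Cdb: "C d b = 1/y" using bc Cdc by simp
    have Da: "D a = (x-1)*u b" and Db: "D b = (1/x-1)*u a + (y-1)*u d" and Dd: "D d = (1/y-1)*u b"
      using ab bd ad bc by (auto simp: D_def)
    have U3: "u a + u b + u d \<le> U" unfolding U_def by (rule sum3_le) (use unn ab ad bd in auto)
    have e1: "r b \<le> r a"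
    proof (rule edge)
      have "x * (U + ((1/x-1)*u a + (y-1)*u d)) - (U + (x-1)*u b) = (x-1)*(U - u a - u b) + x*(y-1)*u d"
        using xpos by (simp add: algebra_simps)
      moreover have "(x-1)*(U - u a - u b) \<ge> 0" using U3 x1 unn[of d] by simp
      moreover have "x*(y-1)*u d \<ge> 0" using xpos y1' unn by simp
      ultimately show "C b a * (U + D a) \<le> U + D b" unfolding Cba Da Db
        by (intro divle xpos) linarith
    qed
    have e2: "r d \<le> r b"
    proof (rule edge)
      have "y * (U + (1/y-1)*u b) - (U + ((1/x-1)*u a + (y-1)*u d)) = (y-1)*(U - u b - u d) + (1 - 1/x)*u a"
        using ypos by (simp add: algebra_simps)
      moreover have "(y-1)*(U - u b - u d) \<ge> 0" using U3 y1' unn[of a] by simp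
      moreover have "(1 - 1/x)*u a \<ge> 0" using ix unn by simp
      ultimately show "C d b * (U + D b) \<le> U + D d" unfolding Cdb Db Dd
        by (intro divle ypos) linarith
    qed
    have e3: "r a \<le> r d"
    proof (rule edge1)
      show "(a,d) \<notin> {(a,b),(b,a),(c,d),(d,c)}" using ab bd ad bc by auto
      show "D d \<le> D a" unfolding Da Dd by (rule sgn_le) (use ix x1 y1' unn in auto)
    qed
    show ?thesis
    proof
      fix q
      show "r q = r a"
      proof (cases "q \<in> {a,b,d}")
        case True thus ?thesis using e1 e2 e3 by auto
      next
        case False
        have Dq: "D q = 0" using False bc by (intro Dfree) auto
        have "r a \<le> r q"
        proof (rule edge1)
          show "(a,q) \<notin> {(a,b),(b,a),(c,d),(d,c)}" using False bc by auto
          show "D q \<le> D a" unfolding Dq Da using sgn_le[of 0 "x-1" 0 "u b"] x1 unn by simp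
        qed
        moreover have "r q \<le> r d"
        proof (rule edge1)
          show "(q,d) \<notin> {(a,b),(b,a),(c,d),(d,c)}" using False bc by auto
          show "D d \<le> D q" unfolding Dq Dd using sgn_le[of "1/y-1" 0 "u b" 0] ix x1 y1' unn by simp
        qed
        ultimately show ?thesis using e1 e2 e3 by auto
      qed
    qed
  next
    case bd
    have ac: "a \<noteq> c" using d1 bd by auto
    have bc: "b \<noteq> c" using cd bd by auto
    have Ccb: "C c b = y" using bd by (simp add: y_def)
    have Cbc: "C b c = 1/y" using bd Cdc by simp
    have Da: "D a = (x-1)*u b" and Db: "D b = (1/x-1)*u a + (1/y-1)*u c" and Dc: "D c = (y-1)*u b"
      using ab bc ac bd by (auto simp: D_def)
    have U3: "u a + u b + u c \<le> U" unfolding U_def by (rule sum3_le) (use unn ab ac bc in auto)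
    have xy1: "x / y \<ge> 1" using xy' ypos by (simp add: divide_simps)
    have e1: "r b \<le> r a"
    proof (rule edge)
      have "x * (U + ((1/x-1)*u a + (1/y-1)*u c)) - (U + (x-1)*u b) = (x-1)*(U - u a - u b) + (x/y - x)*u c"
        using xpos ypos by (simp add: algebra_simps)
      moreover have "(x-1)*(U - u a - u b) \<ge> (x-1)*u c" using U3 x1 by (intro mult_left_mono) auto
      moreover have "(x-1)*u c + (x/y - x)*u c \<ge> 0"
      proof -
        have "(x-1)*u c + (x/y - x)*u c = (x/y - 1) * u c" by (simp add: algebra_simps)
        thus ?thesis using xy1 unn by simp
      qed
      ultimately show "C b a * (U + D a) \<le> U + D b" unfolding Cba Da Db
        by (intro divle xpos) linarith
    qed
    have e2: "r a \<le> r c"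
    proof (rule edge1)
      show "(a,c) \<notin> {(a,b),(b,a),(c,d),(d,c)}" using ab bc ac bd by auto
      show "D c \<le> D a" unfolding Da Dc using xy' unn by (intro mult_right_mono) auto
    qed
    have e3: "r c \<le> r b"
    proof (cases "\<exists>p. p \<notin> {a,b,c}")
      case True
      then obtain p where p: "p \<notin> {a,b,c}" by blast
      have Dp: "D p = 0" using p bd by (intro Dfree) auto
      have "r c \<le> r p"
      proof (rule edge1)
        show "(c,p) \<notin> {(a,b),(b,a),(c,d),(d,c)}" using p bd by auto
        show "D p \<le> D c" unfolding Dp Dc using sgn_le[of 0 "y-1" 0 "u b"] y1' unn by simp
      qed
      moreover have "r p \<le> r b"
      proof (rule edge1)
        show "(p,b) \<notin> {(a,b),(b,a),(c,d),(d,c)}" using p bd by auto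
        show "D b \<le> D p" unfolding Dp Db
        proof -
          have "(1/x-1)*u a \<le> 0" "(1/y-1)*u c \<le> 0" using ix unn by (auto intro: mult_nonpos_nonneg)
          thus "(1/x-1)*u a + (1/y-1)*u c \<le> 0" by linarith
        qed
      qed
      ultimately show ?thesis by simp
    next
      case False
      hence "UNIV = {a,b,c}" by auto
      hence Ueq: "U = u a + u b + u c" unfolding U_def by (rule sum3_eq) (use ab ac bc in auto)
      show ?thesis
      proof (rule edge)
        have "(U + (y-1)*u b) - y * (U + ((1/x-1)*u a + (1/y-1)*u c)) = (1 - y/x) * u a"
          using ypos xpos Ueq by (simp add: algebra_simps)
        moreover have "(1 - y/x) * u a \<ge> 0" using xy' xpos unn by (simp add: divide_simps)
        ultimately show "C c b * (U + D b) \<le> U + D c" unfolding Ccb Db Dc by linarith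
      qed
    qed
    show ?thesis
    proof
      fix q
      show "r q = r a"
      proof (cases "q \<in> {a,b,c}")
        case True thus ?thesis using e1 e2 e3 by auto
      next
        case False
        have Dq: "D q = 0" using False bd by (intro Dfree) auto
        have "r a \<le> r q"
        proof (rule edge1)
          show "(a,q) \<notin> {(a,b),(b,a),(c,d),(d,c)}" using False bd by auto
          show "D q \<le> D a" unfolding Dq Da using sgn_le[of 0 "x-1" 0 "u b"] x1 unn by simp
        qed
        moreover have "r q \<le> r b"
        proof (rule edge1)
          show "(q,b) \<notin> {(a,b),(b,a),(c,d),(d,c)}" using False bd by auto
          show "D b \<le> D q" unfolding Dq Db
          proof -
            have "(1/x-1)*u a \<le> 0" "(1/y-1)*u c \<le> 0" using ix unn by (auto intro: mult_nonpos_nonneg)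
            thus "(1/x-1)*u a + (1/y-1)*u c \<le> 0" by linarith
          qed
        qed
        ultimately show ?thesis using e1 e2 e3 by auto
      qed
    qed
  qed
  show ?thesis using all by blast
qed

lemma core2:
  fixes C :: "'n::finite \<Rightarrow> 'n \<Rightarrow> real" and u r :: "'n \<Rightarrow> real"
  assumes ab: "a \<noteq> b" and cd: "c \<noteq> d" and abcd: "{a,b} \<noteq> {c,d}"
  and pos: "\<And>p q. C p q > 0"
  and recip: "\<And>p q. C q p = 1 / C p q"
  and one: "\<And>p q. (p,q) \<notin> {(a,b),(b,a),(c,d),(d,c)} \<Longrightarrow> C p q = 1"
  and x1: "1 \<le> C a b" and y1: "1 \<le> C c d"
  and upos: "\<And>p. u p > 0"
  and eig: "\<And>p. (\<Sum>q\<in>UNIV. C p q * u q) = lam * u p"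
  and mono: "\<And>p q. C p q * u q \<le> u p \<Longrightarrow> r p \<le> r q"
  shows "r p = r a"
proof (cases "C c d \<le> C a b")
  case True
  show ?thesis by (rule core[OF ab cd abcd pos recip one y1 True upos eig mono])
next
  case False
  have one': "C p q = 1" if "(p,q) \<notin> {(c,d),(d,c),(a,b),(b,a)}" for p q
    using that one by auto
  have r: "r p = r c" for p
    by (rule core[OF cd ab _ pos recip one' x1 _ upos eig mono]) (use abcd False in auto)
  show ?thesis using r[of p] r[of a] by simp
qed

lemma orient:
  fixes C :: "'n \<Rightarrow> 'n \<Rightarrow> real"
  assumes "i \<noteq> j" and pos: "\<And>p q. C p q > 0" and recip: "\<And>p q. C q p = 1 / C p q"
  obtains a b where "a \<noteq> b" "{a,b} = {i,j}" "{(a,b),(b,a)} = {(i,j),(j,i)}" "1 \<le> C a b"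
proof (cases "1 \<le> C i j")
  case True thus ?thesis using that[of i j] assms(1) by auto
next
  case False
  have "C j i = 1 / C i j" by (rule recip)
  moreover have "1 / C i j \<ge> 1" using False pos[of i j] by (simp add: divide_simps)
  ultimately have "1 \<le> C j i" by simp
  thus ?thesis using that[of j i] assms(1) by auto
qed

lemma core_gen:
  fixes C :: "'n::finite \<Rightarrow> 'n \<Rightarrow> real" and u r :: "'n \<Rightarrow> real"
  assumes ij: "i \<noteq> j" and kl: "k \<noteq> l" and ijkl: "{i,j} \<noteq> {k,l}"
  and pos: "\<And>p q. C p q > 0"
  and recip: "\<And>p q. C q p = 1 / C p q"
  and one: "\<And>p q. (p,q) \<notin> {(i,j),(j,i),(k,l),(l,k)} \<Longrightarrow> C p q = 1"
  and upos: "\<And>p. u p > 0"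
  and eig: "\<And>p. (\<Sum>q\<in>UNIV. C p q * u q) = lam * u p"
  and mono: "\<And>p q. C p q * u q \<le> u p \<Longrightarrow> r p \<le> r q"
  shows "r p = r q"
proof -
  obtain a b where ab: "a \<noteq> b" "{a,b} = {i,j}" "{(a,b),(b,a)} = {(i,j),(j,i)}" "1 \<le> C a b"
    by (rule orient[OF ij pos recip])
  obtain c d where cd: "c \<noteq> d" "{c,d} = {k,l}" "{(c,d),(d,c)} = {(k,l),(l,k)}" "1 \<le> C c d"
    by (rule orient[OF kl pos recip])
  have S: "{(a,b),(b,a),(c,d),(d,c)} = {(i,j),(j,i),(k,l),(l,k)}"
  proof -
    have "{(a,b),(b,a),(c,d),(d,c)} = {(a,b),(b,a)} \<union> {(c,d),(d,c)}" by auto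
    also have "\<dots> = {(i,j),(j,i)} \<union> {(k,l),(l,k)}" using ab(3) cd(3) by simp
    also have "\<dots> = {(i,j),(j,i),(k,l),(l,k)}" by auto
    finally show ?thesis .
  qed
  have one': "C p q = 1" if "(p,q) \<notin> {(a,b),(b,a),(c,d),(d,c)}" for p q
    using that one[of p q] unfolding S by simp
  have abcd: "{a,b} \<noteq> {c,d}" using ab(2) cd(2) ijkl by simp
  have "r p = r a" by (rule core2[OF ab(1) cd(1) abcd pos recip one' ab(4) cd(4) upos eig mono])
  moreover have "r q = r a" by (rule core2[OF ab(1) cd(1) abcd pos recip one' ab(4) cd(4) upos eig mono])
  ultimately show ?thesis by simp
qed



theorem theorem6:
  fixes A :: "real^'n^'n" and w :: "real^'n"
  assumes "double_perturbed A"
    and "principal_right_eigenvector A w"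
  shows "efficient A w"
proof -
  from assms(1) obtain B i j k l where pcm: "is_PCM A" and cB: "consistent_PCM B"
    and ij: "i \<noteq> j" and kl: "k \<noteq> l" and ijkl: "{i,j} \<noteq> {k,l}"
    and eqB: "\<And>p q. (p, q) \<notin> {(i, j), (j, i), (k, l), (l, k)} \<Longrightarrow> A$p$q = B$p$q"
    unfolding double_perturbed_def by blast
  from assms(2) obtain lam where wpos: "\<And>p. w$p > 0" and ev: "A *v w = lam *s w"
    unfolding principal_right_eigenvector_def by blast
  have Apos: "\<And>p q. A$p$q > 0" and Arec: "\<And>p q. A$p$q = 1 / A$q$p"
    using pcm unfolding is_PCM_def by blast+
  have Bpos: "\<And>p q. B$p$q > 0" and Brec: "\<And>p q. B$p$q = 1 / B$q$p"
    and Bcons: "\<And>p q s. B$p$s * B$s$q = B$p$q"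
    using cB unfolding consistent_PCM_def is_PCM_def by blast+
  define b where "b p = B$p$i" for p
  have bpos: "b p > 0" for p using Bpos by (simp add: b_def)
  have Bb: "B$p$q = b p / b q" for p q
  proof -
    have "B$p$q = B$p$i * B$i$q" using Bcons[of p i q] by simp
    also have "B$i$q = 1 / B$q$i" by (rule Brec)
    finally show ?thesis by (simp add: b_def)
  qed
  define C where "C p q = A$p$q * b q / b p" for p q
  define u where "u p = w$p / b p" for p
  have Cpos: "C p q > 0" for p q using Apos bpos by (simp add: C_def)
  have Crec: "C q p = 1 / C p q" for p q
    using Arec[of q p] Apos[of p q] bpos[of p] bpos[of q] by (simp add: C_def field_simps)
  have Cone: "C p q = 1" if "(p, q) \<notin> {(i, j), (j, i), (k, l), (l, k)}" for p q
    using eqB[OF that] Bb[of p q] bpos[of p] bpos[of q] by (simp add: C_def)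
  have upos: "u p > 0" for p using wpos bpos by (simp add: u_def)
  have eig: "(\<Sum>q\<in>UNIV. C p q * u q) = lam * u p" for p
  proof -
    have "(\<Sum>q\<in>UNIV. C p q * u q) = (\<Sum>q\<in>UNIV. A$p$q * w$q) / b p"
      unfolding sum_divide_distrib
    proof (intro sum.cong refl)
      fix q
      show "C p q * u q = A$p$q * w$q / b p"
        using bpos[of p] bpos[of q] by (simp add: C_def u_def)
    qed
    also have "(\<Sum>q\<in>UNIV. A$p$q * w$q) = (A *v w)$p" by (simp add: matrix_vector_mult_def)
    also have "\<dots> = lam * w$p" using ev by simp
    finally show ?thesis by (simp add: u_def)
  qed
  show ?thesis
    unfolding efficient_def
  proof (intro conjI notI)
    show "\<forall>p. w$p > 0" using wpos by blast
  next
    assume "\<exists>w'::real^'n. (\<forall>i. w'$i > 0) \<and>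
          (\<forall>i j. \<bar>A$i$j - w'$i / w'$j\<bar> \<le> \<bar>A$i$j - w$i / w$j\<bar>) \<and>
          (\<exists>k l. \<bar>A$k$l - w'$k / w'$l\<bar> < \<bar>A$k$l - w$k / w$l\<bar>)"
    then obtain w' :: "real^'n" where w'pos: "\<And>p. w'$p > 0"
      and dom: "\<And>p q. \<bar>A$p$q - w'$p / w'$q\<bar> \<le> \<bar>A$p$q - w$p / w$q\<bar>"
      and strict: "\<exists>k0 l0. \<bar>A$k0$l0 - w'$k0 / w'$l0\<bar> < \<bar>A$k0$l0 - w$k0 / w$l0\<bar>"
      by blast
    define r where "r p = w'$p / w$p" for p
    have mono: "r p \<le> r q" if h: "C p q * u q \<le> u p" for p q
    proof -
      have "A$p$q * w$q \<le> w$p"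
        using h bpos[of p] bpos[of q] by (simp add: C_def u_def divide_simps)
      hence ge: "A$p$q \<le> w$p / w$q" using wpos[of q] by (simp add: divide_simps)
      have "w'$p / w'$q \<le> w$p / w$q" using dom[of p q] ge by linarith
      thus ?thesis using wpos[of p] wpos[of q] w'pos[of p] w'pos[of q]
        by (simp add: r_def divide_simps mult.commute)
    qed
    have req: "r p = r q" for p q
      by (rule core_gen[OF ij kl ijkl Cpos Crec Cone upos eig mono])
    have "w'$k0 / w'$l0 = w$k0 / w$l0" for k0 l0
      using req[of k0 l0] wpos[of k0] wpos[of l0] w'pos[of k0] w'pos[of l0]
      by (simp add: r_def divide_simps mult.commute)
    thus False using strict by (metis less_irrefl)
  qed
qed

end
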